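(* Let $S$ be a Hausdorff semitopological semigroup and let $(x_n)$, $(y_n)$ be unbounded sequences in $S$. Let $\mu,\nu\in S^*$ with $\nu\in\mathrm{cl}_{S^{Lmc}}\varepsilon(\{x_n:n\in\mathbb{N}\})$ and $\mu\in\mathrm{cl}_{S^{Lmc}}\varepsilon(\{y_n:n\in\mathbb{N}\})$. Then $$\mu\nu\in\mathrm{cl}_{S^{Lmc}}\varepsilon(\{y_kx_n:k<n,\ k,n\in\mathbb{N}\}).$$
   Context: A Hausdorff semitopological semigroup is a semigroup $S$ with a Hausdorff topology such that all maps $\lambda_s(x)=sx$, $r_s(x)=xs$ are continuous. $\mathcal{CB}(S)$: bounded continuous complex functions with sup norm; $\beta S$ its spectrum with Gelfand topology; $L_sf(x)=f(sx)$, $(T_\mu f)(s)=\mu(L_sf)$; $Lmc(S)=\{f\in\mathcal{CB}(S):T_\mu f\in\mathcal{CB}(S)\ \forall \mu\in\beta S\}$. $S^{Lmc}$ is the spectrum of $Lmc(S)$ with the Gelfand topology and multiplication $\mu\nu=\mu\circ T_\nu$, where $(T_\nu f)(s)=\nu(L_sf)$ for $f\in Lmc(S)$; $\varepsilon:S\to S^{Lmc}$ is evaluation, $\varepsilon(s)(f)=f(s)$. $S^*=S^{Lmc}\setminus\varepsilon(S)$. A set $A\subseteq S$ is unbounded if $\mathrm{cl}_{S^{Lmc}}\varepsilon(A)\cap S^*\neq\emptyset$; a sequence $(x_n)$ is unbounded if $\{x_n:n\in\mathbb{N}\}$ is unbounded. *)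

theory Defs
  imports "HOL-Analysis.Analysis"
begin

text \<open>The type
  ('a \<Rightarrow> complex) \<Rightarrow> complex carries the product topology (pointwise
  convergence), so for functionals vanishing outside a function algebra A
  it restricts to the weak-star (Gelfand) topology on the spectrum of A.\<close>

definition semitopological :: "'a::{topological_space, semigroup_mult} itself \<Rightarrow> bool" where
  "semitopological _ \<longleftrightarrow>
     (\<forall>s::'a. continuous_on UNIV (\<lambda>x. s * x) \<and> continuous_on UNIV (\<lambda>x. x * s))"

definition CB :: "('a::topological_space \<Rightarrow> complex) set" where
  "CB = {f. continuous_on UNIV f \<and> bounded (range f)}"

definition spectrum_of :: "('a \<Rightarrow> complex) set \<Rightarrow> (('a \<Rightarrow> complex) \<Rightarrow> complex) set" where
  "spectrum_of A = {\<mu>.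
      (\<forall>f\<in>A. \<forall>g\<in>A. \<mu> (\<lambda>x. f x + g x) = \<mu> f + \<mu> g) \<and>
      (\<forall>c. \<forall>f\<in>A. \<mu> (\<lambda>x. c * f x) = c * \<mu> f) \<and>
      (\<forall>f\<in>A. \<forall>g\<in>A. \<mu> (\<lambda>x. f x * g x) = \<mu> f * \<mu> g) \<and>
      (\<exists>f\<in>A. \<mu> f \<noteq> 0) \<and>
      (\<forall>f. f \<notin> A \<longrightarrow> \<mu> f = 0)}"

definition betaS :: "(('a::topological_space \<Rightarrow> complex) \<Rightarrow> complex) set" where
  "betaS = spectrum_of CB"

definition Ltrans :: "'a::semigroup_mult \<Rightarrow> ('a \<Rightarrow> complex) \<Rightarrow> ('a \<Rightarrow> complex)" where
  "Ltrans s f = (\<lambda>x. f (s * x))"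

definition Top :: "(('a::semigroup_mult \<Rightarrow> complex) \<Rightarrow> complex) \<Rightarrow> ('a \<Rightarrow> complex) \<Rightarrow> ('a \<Rightarrow> complex)" where
  "Top \<mu> f = (\<lambda>s. \<mu> (Ltrans s f))"

definition Lmc :: "('a::{topological_space, semigroup_mult} \<Rightarrow> complex) set" where
  "Lmc = {f \<in> CB. \<forall>\<mu>\<in>betaS. Top \<mu> f \<in> CB}"

definition SLmc :: "(('a::{topological_space, semigroup_mult} \<Rightarrow> complex) \<Rightarrow> complex) set" where
  "SLmc = spectrum_of Lmc"

definition Lmc_mult ::
  "(('a::{topological_space, semigroup_mult} \<Rightarrow> complex) \<Rightarrow> complex) \<Rightarrow>
   (('a \<Rightarrow> complex) \<Rightarrow> complex) \<Rightarrow> (('a \<Rightarrow> complex) \<Rightarrow> complex)" where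
  "Lmc_mult \<mu> \<nu> = (\<lambda>f. if f \<in> Lmc then \<mu> (Top \<nu> f) else 0)"

definition evl :: "'a::{topological_space, semigroup_mult} \<Rightarrow> (('a \<Rightarrow> complex) \<Rightarrow> complex)" where
  "evl s = (\<lambda>f. if f \<in> Lmc then f s else 0)"

definition Sstar :: "(('a::{topological_space, semigroup_mult} \<Rightarrow> complex) \<Rightarrow> complex) set" where
  "Sstar = SLmc - range evl"

definition clLmc :: "'a::{topological_space, semigroup_mult} set \<Rightarrow> (('a \<Rightarrow> complex) \<Rightarrow> complex) set" where
  "clLmc A = closure (evl ` A) \<inter> SLmc"

definition unbounded_set :: "'a::{topological_space, semigroup_mult} set \<Rightarrow> bool" where
  "unbounded_set A \<longleftrightarrow> clLmc A \<inter> Sstar \<noteq> {}"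

definition unbounded_seq :: "(nat \<Rightarrow> 'a::{topological_space, semigroup_mult}) \<Rightarrow> bool" where
  "unbounded_seq x \<longleftrightarrow> unbounded_set (range x)"

end

theory Submission imports Defs begin

definition approx :: "('i \<Rightarrow> complex) \<Rightarrow> ('i \<Rightarrow> complex) set \<Rightarrow> bool" where
  "approx \<phi> S \<longleftrightarrow> (\<forall>F e. finite F \<and> e > 0 \<longrightarrow> (\<exists>s\<in>S. \<forall>f\<in>F. cmod (s f - \<phi> f) < e))"

lemma coord_cont: "continuous_on S (\<lambda>\<phi>::'i \<Rightarrow> 'b::topological_space. \<phi> i)"
  by (metis continuous_on_product_coordinates continuous_on_subset subset_UNIV)

lemma closure_approx:
  fixes \<phi> :: "'i \<Rightarrow> complex"
  shows "\<phi> \<in> closure S \<longleftrightarrow> approx \<phi> S"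
proof
  assume H: "\<phi> \<in> closure S"
  show "approx \<phi> S" unfolding approx_def
  proof (intro allI impI)
    fix F :: "'i set" and e assume Fe: "finite F \<and> (e::real) > 0"
    define U where "U = {f. \<forall>i\<in>F. f (id i) \<in> ball (\<phi> i) e}"
    have "open U" unfolding U_def
      by (rule product_topology_basis') (use Fe in auto)
    moreover have "\<phi> \<in> U" using Fe by (auto simp: U_def)
    ultimately have "U \<inter> S \<noteq> {}" using H open_Int_closure_eq_empty by blast
    then obtain s where "s \<in> S" "s \<in> U" by blast
    moreover have "\<forall>f\<in>F. cmod (s f - \<phi> f) < e"
      using \<open>s \<in> U\<close> unfolding U_def by (metis (mono_tags, lifting) mem_Collect_eq id_apply mem_ball dist_norm norm_minus_commute)
    ultimately show "\<exists>s\<in>S. \<forall>f\<in>F. cmod (s f - \<phi> f) < e" by blast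
  qed
next
  assume A: "approx \<phi> S"
  show "\<phi> \<in> closure S" unfolding closure_iff_nhds_not_empty
  proof (intro allI impI)
    fix B U assume UB: "U \<subseteq> B" "open U" "\<phi> \<in> U"
    then obtain X where X: "\<phi> \<in> (\<Pi>\<^sub>E i\<in>UNIV. X i)" "\<forall>i. openin euclidean (X i)"
      "finite {i. X i \<noteq> topspace euclidean}" "(\<Pi>\<^sub>E i\<in>UNIV. X i) \<subseteq> U"
      using product_topology_open_contains_basis[of "\<lambda>i. euclidean" UNIV U \<phi>]
      unfolding open_fun_def by auto
    define I where "I = {i. X i \<noteq> UNIV}"
    have fI: "finite I" using X(3) by (simp add: I_def)
    have "\<forall>i. \<exists>e>0. ball (\<phi> i) e \<subseteq> X i"
      using X(1,2) by (auto simp: PiE_iff openin_open open_contains_ball)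
    then obtain ee where ee: "\<And>i. ee i > 0" "\<And>i. ball (\<phi> i) (ee i) \<subseteq> X i" by metis
    define e where "e = Min (insert 1 (ee ` I))"
    have e0: "e > 0" unfolding e_def using fI ee(1) by auto
    have eI: "e \<le> ee i" if "i \<in> I" for i unfolding e_def using fI that by auto
    obtain s where s: "s \<in> S" "\<forall>f\<in>I. cmod (s f - \<phi> f) < e"
      using A fI e0 unfolding approx_def by blast
    have "s \<in> (\<Pi>\<^sub>E i\<in>UNIV. X i)"
    proof -
      have "s i \<in> X i" for i
      proof (cases "i \<in> I")
        case True
        then have "s i \<in> ball (\<phi> i) (ee i)" using s(2) eI[OF True]
          by (auto simp: dist_norm norm_minus_commute)
        then show ?thesis using ee(2) by blast
      next
        case False then show ?thesis by (auto simp: I_def)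
      qed
      then show ?thesis by (auto simp: PiE_iff)
    qed
    then show "S \<inter> B \<noteq> {}" using s(1) X(4) UB(1) by blast
  qed
qed


definition alg :: "('a \<Rightarrow> complex) set \<Rightarrow> bool" where
  "alg A \<longleftrightarrow> (\<lambda>x. 1) \<in> A \<and> (\<forall>f\<in>A. \<forall>g\<in>A. (\<lambda>x. f x + g x) \<in> A) \<and>
     (\<forall>c. \<forall>f\<in>A. (\<lambda>x. c * f x) \<in> A) \<and> (\<forall>f\<in>A. \<forall>g\<in>A. (\<lambda>x. f x * g x) \<in> A)"

definition chars :: "('a \<Rightarrow> complex) set \<Rightarrow> (('a \<Rightarrow> complex) \<Rightarrow> complex) set" where
  "chars A = {\<phi>.
      (\<forall>f\<in>A. \<forall>g\<in>A. \<phi> (\<lambda>x. f x + g x) = \<phi> f + \<phi> g) \<and>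
      (\<forall>c. \<forall>f\<in>A. \<phi> (\<lambda>x. c * f x) = c * \<phi> f) \<and>
      (\<forall>f\<in>A. \<forall>g\<in>A. \<phi> (\<lambda>x. f x * g x) = \<phi> f * \<phi> g) \<and>
      \<phi> (\<lambda>x. 1) = 1 \<and>
      (\<forall>f. f \<notin> A \<longrightarrow> \<phi> f = 0)}"

lemma spectrum_chars:
  assumes "alg A" shows "spectrum_of A = chars A"
proof
  show "spectrum_of A \<subseteq> chars A"
  proof
    fix \<phi> assume H: "\<phi> \<in> spectrum_of A"
    have one: "(\<lambda>x. 1) \<in> A" using assms by (simp add: alg_def)
    from H obtain f0 where f0: "f0 \<in> A" "\<phi> f0 \<noteq> 0" by (auto simp: spectrum_of_def)
    have "\<forall>f\<in>A. \<forall>g\<in>A. \<phi> (\<lambda>x. f x * g x) = \<phi> f * \<phi> g"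
      using H by (simp add: spectrum_of_def)
    from this[rule_format, OF f0(1) one]
    have "\<phi> (\<lambda>x. f0 x * 1) = \<phi> f0 * \<phi> (\<lambda>x. 1)" .
    then have "\<phi> (\<lambda>x. 1) = 1" using f0 by simp
    then show "\<phi> \<in> chars A" using H unfolding spectrum_of_def chars_def by blast
  qed
next
  show "chars A \<subseteq> spectrum_of A"
  proof
    fix \<phi> assume H: "\<phi> \<in> chars A"
    have one: "(\<lambda>x. 1) \<in> A" using assms by (simp add: alg_def)
    have "\<exists>f\<in>A. \<phi> f \<noteq> 0"
      by (rule bexI[OF _ one]) (use H in \<open>simp add: chars_def\<close>)
    then show "\<phi> \<in> spectrum_of A" using H unfolding chars_def spectrum_of_def by blast
  qed
qed

lemma closed_Ball_Collect: "(\<And>f. f \<in> A \<Longrightarrow> closed {x. P f x}) \<Longrightarrow> closed {x. \<forall>f\<in>A. P f x}"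
proof -
  assume "\<And>f. f \<in> A \<Longrightarrow> closed {x. P f x}"
  moreover have "{x. \<forall>f\<in>A. P f x} = (\<Inter>f\<in>A. {x. P f x})" by auto
  ultimately show ?thesis by auto
qed

lemma closed_chars: "closed (chars A)"
  unfolding chars_def
  apply (intro closed_Collect_conj closed_Ball_Collect closed_Collect_all closed_Collect_eq)
  apply (auto intro!: continuous_intros coord_cont)
  subgoal for f by (cases "f \<in> A") (simp_all add: closed_Collect_eq[OF coord_cont continuous_on_const])
  done

lemma chars_in_ev:
  assumes "alg A" shows "(\<lambda>f. if f \<in> A then f s else 0) \<in> chars A"
proof -
  from assms have a: "(\<lambda>x. 1) \<in> A" "\<And>f g. f\<in>A \<Longrightarrow> g\<in>A \<Longrightarrow> (\<lambda>x. f x + g x) \<in> A"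
    "\<And>c f. f\<in>A \<Longrightarrow> (\<lambda>x. c * f x) \<in> A" "\<And>f g. f\<in>A \<Longrightarrow> g\<in>A \<Longrightarrow> (\<lambda>x. f x * g x) \<in> A"
    unfolding alg_def by blast+
  show ?thesis unfolding chars_def by (simp add: a)
qed

lemma closure_ev_chars:
  assumes "alg A" shows "closure ((\<lambda>s f. if f \<in> A then f s else 0) ` T) \<subseteq> chars A"
  by (rule closure_minimal) (use chars_in_ev[OF assms] closed_chars in auto)

lemma char_add: "\<phi> \<in> chars A \<Longrightarrow> f \<in> A \<Longrightarrow> g \<in> A \<Longrightarrow> \<phi> (\<lambda>x. f x + g x) = \<phi> f + \<phi> g"
  unfolding chars_def by blast
lemma char_scal: "\<phi> \<in> chars A \<Longrightarrow> f \<in> A \<Longrightarrow> \<phi> (\<lambda>x. c * f x) = c * \<phi> f"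
  unfolding chars_def by blast
lemma char_mult: "\<phi> \<in> chars A \<Longrightarrow> f \<in> A \<Longrightarrow> g \<in> A \<Longrightarrow> \<phi> (\<lambda>x. f x * g x) = \<phi> f * \<phi> g"
  unfolding chars_def by blast
lemma char_one: "\<phi> \<in> chars A \<Longrightarrow> \<phi> (\<lambda>x. 1) = 1"
  unfolding chars_def by blast
lemma char_out: "\<phi> \<in> chars A \<Longrightarrow> f \<notin> A \<Longrightarrow> \<phi> f = 0"
  unfolding chars_def by blast

lemma alg_const: assumes "alg A" shows "(\<lambda>x. c) \<in> A"
proof -
  have "\<forall>c. \<forall>f\<in>A. (\<lambda>x. c * f x) \<in> A" "(\<lambda>x. 1) \<in> A" using assms unfolding alg_def by blast+
  from this(1)[rule_format, OF this(2), of c] show ?thesis by simp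
qed

lemma char_const: assumes "\<phi> \<in> chars A" "alg A" shows "\<phi> (\<lambda>x. c) = c"
proof -
  have "\<phi> (\<lambda>x. c * 1) = c * \<phi> (\<lambda>x. 1)"
    using char_scal[OF assms(1), of "\<lambda>x. 1" c] assms(2) by (simp add: alg_def)
  then show ?thesis using char_one[OF assms(1)] by simp
qed

lemma char_sum:
  assumes "\<phi> \<in> chars A" "alg A" "finite I" "\<And>i. i \<in> I \<Longrightarrow> t i \<in> A"
  shows "(\<lambda>x. \<Sum>i\<in>I. t i x) \<in> A \<and> \<phi> (\<lambda>x. \<Sum>i\<in>I. t i x) = (\<Sum>i\<in>I. \<phi> (t i))"
  using assms(3,4)
proof (induction I rule: finite_induct)
  case empty
  then show ?case using alg_const[OF assms(2), of 0] char_const[OF assms(1,2), of 0] by simp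
next
  case (insert a I)
  then have IH: "(\<lambda>x. \<Sum>i\<in>I. t i x) \<in> A" "\<phi> (\<lambda>x. \<Sum>i\<in>I. t i x) = (\<Sum>i\<in>I. \<phi> (t i))"
    and ta: "t a \<in> A" by auto
  have "\<forall>f\<in>A. \<forall>g\<in>A. (\<lambda>x. f x + g x) \<in> A" using assms(2) unfolding alg_def by blast
  from this[rule_format, OF ta IH(1)]
  have mem: "(\<lambda>x. t a x + (\<Sum>i\<in>I. t i x)) \<in> A" by simp
  have eq: "\<phi> (\<lambda>x. t a x + (\<Sum>i\<in>I. t i x)) = \<phi> (t a) + \<phi> (\<lambda>x. \<Sum>i\<in>I. t i x)"
    using char_add[OF assms(1) ta IH(1)] by simp
  have e: "(\<lambda>x. \<Sum>i\<in>insert a I. t i x) = (\<lambda>x. t a x + (\<Sum>i\<in>I. t i x))"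
    using insert.hyps(1,2) by simp
  have s: "(\<Sum>i\<in>insert a I. \<phi> (t i)) = \<phi> (t a) + (\<Sum>i\<in>I. \<phi> (t i))"
    by (rule sum.insert[OF insert.hyps(1,2)])
  show ?case
  proof
    show "(\<lambda>x. \<Sum>i\<in>insert a I. t i x) \<in> A" unfolding e by (rule mem)
    show "\<phi> (\<lambda>x. \<Sum>i\<in>insert a I. t i x) = (\<Sum>i\<in>insert a I. \<phi> (t i))"
      unfolding e eq IH(2) s by (rule refl)
  qed
qed

lemma CB_iff: "f \<in> CB \<longleftrightarrow> continuous_on UNIV f \<and> (\<exists>B>0. \<forall>x. cmod (f x) \<le> B)"
  unfolding CB_def bounded_pos by auto

lemma alg_CB: "alg (CB :: ('a::topological_space \<Rightarrow> complex) set)"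
  unfolding alg_def
proof (intro conjI ballI allI)
  show "(\<lambda>x. 1) \<in> CB" unfolding CB_iff
    by (intro conjI continuous_on_const exI[of _ 1]) simp_all
next
  fix f g :: "'a \<Rightarrow> complex" assume "f \<in> CB" "g \<in> CB"
  then obtain B1 B2 where B: "B1 > 0" "\<forall>x. cmod (f x) \<le> B1" "B2 > 0" "\<forall>x. cmod (g x) \<le> B2"
    and c: "continuous_on UNIV f" "continuous_on UNIV g" unfolding CB_iff by auto
  have "cmod (f x + g x) \<le> B1 + B2" for x
    by (rule order_trans[OF norm_triangle_ineq add_mono]) (use B in auto)
  then have "\<exists>B>0. \<forall>x. cmod (f x + g x) \<le> B" using B by (intro exI[of _ "B1+B2"]) auto
  moreover have "continuous_on UNIV (\<lambda>x. f x + g x)" by (intro continuous_intros c)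
  ultimately show "(\<lambda>x. f x + g x) \<in> CB" unfolding CB_iff by blast
  have "cmod (f x * g x) \<le> B1 * B2" for x
    unfolding norm_mult by (rule mult_mono) (use B in auto)
  then have "\<exists>B>0. \<forall>x. cmod (f x * g x) \<le> B" using B by (intro exI[of _ "B1*B2"]) auto
  moreover have "continuous_on UNIV (\<lambda>x. f x * g x)" by (intro continuous_intros c)
  ultimately show "(\<lambda>x. f x * g x) \<in> CB" unfolding CB_iff by blast
next
  fix c and f :: "'a \<Rightarrow> complex" assume "f \<in> CB"
  then obtain B1 where B: "B1 > 0" "\<forall>x. cmod (f x) \<le> B1"
    and cf: "continuous_on UNIV f" unfolding CB_iff by auto
  have "cmod (c * f x) \<le> (cmod c + 1) * B1" for x
    unfolding norm_mult by (rule mult_mono) (use B in auto)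
  moreover have "(cmod c + 1) * B1 > 0" using B by (simp add: add_nonneg_pos)
  ultimately have "\<exists>B>0. \<forall>x. cmod (c * f x) \<le> B" by blast
  moreover have "continuous_on UNIV (\<lambda>x. c * f x)" by (intro continuous_intros cf)
  ultimately show "(\<lambda>x. c * f x) \<in> CB" unfolding CB_iff by blast
qed


lemma CB_add: "f \<in> CB \<Longrightarrow> g \<in> CB \<Longrightarrow> (\<lambda>x. f x + g x) \<in> CB"
  using alg_CB unfolding alg_def by blast
lemma CB_mult: "f \<in> CB \<Longrightarrow> g \<in> CB \<Longrightarrow> (\<lambda>x. f x * g x) \<in> CB"
  using alg_CB unfolding alg_def by blast
lemma CB_scal: "f \<in> CB \<Longrightarrow> (\<lambda>x. c * f x) \<in> CB"
  using alg_CB unfolding alg_def by blast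
lemma CB_const: "(\<lambda>x. c) \<in> CB"
  by (rule alg_const[OF alg_CB])

lemma betaS_chars: "betaS = chars CB"
  unfolding betaS_def by (rule spectrum_chars[OF alg_CB])

lemma Ltrans_CB:
  fixes f :: "'a::{topological_space, semigroup_mult} \<Rightarrow> complex"
  assumes "semitopological TYPE('a)" "f \<in> CB" shows "Ltrans s f \<in> CB"
proof -
  have c: "continuous_on UNIV (\<lambda>x::'a. s * x)" using assms(1) unfolding semitopological_def by blast
  from assms(2) obtain B where B: "B > 0" "\<forall>x. cmod (f x) \<le> B" and cf: "continuous_on UNIV f"
    by (auto simp: CB_iff)
  have "continuous_on UNIV (\<lambda>x. f (s * x))" by (rule continuous_on_compose2[OF cf c]) auto
  then show ?thesis using B unfolding CB_iff Ltrans_def by blast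
qed

lemma Top_Ltrans: "Top \<mu> (Ltrans s f) = Ltrans s (Top \<mu> f)"
  by (rule ext) (simp add: Top_def Ltrans_def mult.assoc)

lemma Lmc_iff: "f \<in> Lmc \<longleftrightarrow> f \<in> CB \<and> (\<forall>\<mu>\<in>chars CB. Top \<mu> f \<in> CB)"
  unfolding Lmc_def betaS_chars by blast

lemma Lmc_CB: "f \<in> Lmc \<Longrightarrow> f \<in> CB"
  unfolding Lmc_def by blast

lemma Ltrans_Lmc:
  fixes f :: "'a::{topological_space, semigroup_mult} \<Rightarrow> complex"
  assumes "semitopological TYPE('a)" "f \<in> Lmc" shows "Ltrans s f \<in> Lmc"
  using assms unfolding Lmc_iff by (auto simp: Top_Ltrans intro: Ltrans_CB)

lemma alg_Lmc:
  assumes semi: "semitopological TYPE('a::{topological_space, semigroup_mult})"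
  shows "alg (Lmc :: ('a \<Rightarrow> complex) set)"
  unfolding alg_def
proof (intro conjI ballI allI)
  show "(\<lambda>x. 1) \<in> (Lmc :: ('a \<Rightarrow> complex) set)" unfolding Lmc_iff
  proof (intro conjI ballI)
    show "(\<lambda>x. 1) \<in> CB" by (rule CB_const)
    fix \<mu> :: "('a \<Rightarrow> complex) \<Rightarrow> complex"
    have "Top \<mu> (\<lambda>x. 1) = (\<lambda>s. \<mu> (\<lambda>x. 1))" by (rule ext) (simp add: Top_def Ltrans_def)
    then show "Top \<mu> (\<lambda>x. 1) \<in> CB" by (simp add: CB_const)
  qed
next
  fix f g :: "'a \<Rightarrow> complex" assume f: "f \<in> Lmc" and g: "g \<in> Lmc"
  then have fc: "f \<in> CB" "g \<in> CB" by (auto dest: Lmc_CB)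
  have Lf: "Ltrans s f \<in> CB" "Ltrans s g \<in> CB" for s using fc Ltrans_CB[OF semi] by blast+
  show "(\<lambda>x. f x + g x) \<in> Lmc" unfolding Lmc_iff
  proof (intro conjI ballI)
    show "(\<lambda>x. f x + g x) \<in> CB" using fc by (rule CB_add)
    fix \<mu> :: "('a \<Rightarrow> complex) \<Rightarrow> complex" assume \<mu>: "\<mu> \<in> chars CB"
    have "Top \<mu> (\<lambda>x. f x + g x) = (\<lambda>s. Top \<mu> f s + Top \<mu> g s)"
    proof (rule ext)
      fix s
      have "Ltrans s (\<lambda>x. f x + g x) = (\<lambda>x. Ltrans s f x + Ltrans s g x)" by (simp add: Ltrans_def)
      then show "Top \<mu> (\<lambda>x. f x + g x) s = Top \<mu> f s + Top \<mu> g s"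
        unfolding Top_def using char_add[OF \<mu> Lf] by simp
    qed
    then show "Top \<mu> (\<lambda>x. f x + g x) \<in> CB" using f g \<mu> unfolding Lmc_iff by (auto intro: CB_add)
  qed
  show "(\<lambda>x. f x * g x) \<in> Lmc" unfolding Lmc_iff
  proof (intro conjI ballI)
    show "(\<lambda>x. f x * g x) \<in> CB" using fc by (rule CB_mult)
    fix \<mu> :: "('a \<Rightarrow> complex) \<Rightarrow> complex" assume \<mu>: "\<mu> \<in> chars CB"
    have "Top \<mu> (\<lambda>x. f x * g x) = (\<lambda>s. Top \<mu> f s * Top \<mu> g s)"
    proof (rule ext)
      fix s
      have "Ltrans s (\<lambda>x. f x * g x) = (\<lambda>x. Ltrans s f x * Ltrans s g x)" by (simp add: Ltrans_def)
      then show "Top \<mu> (\<lambda>x. f x * g x) s = Top \<mu> f s * Top \<mu> g s"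
        unfolding Top_def using char_mult[OF \<mu> Lf] by simp
    qed
    then show "Top \<mu> (\<lambda>x. f x * g x) \<in> CB" using f g \<mu> unfolding Lmc_iff by (auto intro: CB_mult)
  qed
next
  fix c and f :: "'a \<Rightarrow> complex" assume f: "f \<in> Lmc"
  then have fc: "f \<in> CB" by (auto dest: Lmc_CB)
  have Lf: "Ltrans s f \<in> CB" for s using fc Ltrans_CB[OF semi] by blast
  show "(\<lambda>x. c * f x) \<in> Lmc" unfolding Lmc_iff
  proof (intro conjI ballI)
    show "(\<lambda>x. c * f x) \<in> CB" using fc by (rule CB_scal)
    fix \<mu> :: "('a \<Rightarrow> complex) \<Rightarrow> complex" assume \<mu>: "\<mu> \<in> chars CB"
    have "Top \<mu> (\<lambda>x. c * f x) = (\<lambda>s. c * Top \<mu> f s)"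
    proof (rule ext)
      fix s
      have "Ltrans s (\<lambda>x. c * f x) = (\<lambda>x. c * Ltrans s f x)" by (simp add: Ltrans_def)
      then show "Top \<mu> (\<lambda>x. c * f x) s = c * Top \<mu> f s"
        unfolding Top_def using char_scal[OF \<mu> Lf] by simp
    qed
    then show "Top \<mu> (\<lambda>x. c * f x) \<in> CB" using f \<mu> unfolding Lmc_iff by (auto intro: CB_scal)
  qed
qed

definition evc :: "'a::topological_space \<Rightarrow> (('a \<Rightarrow> complex) \<Rightarrow> complex)" where
  "evc = (\<lambda>s f. if f \<in> CB then f s else 0)"

lemma evl_eq: "evl = (\<lambda>s f. if f \<in> Lmc then f s else 0)"
  by (rule ext) (simp add: evl_def)

lemma closure_evc: "closure (evc ` T) \<subseteq> chars CB"
  unfolding evc_def by (rule closure_ev_chars[OF alg_CB])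

lemma closure_evl:
  assumes "semitopological TYPE('a::{topological_space, semigroup_mult})"
  shows "closure (evl ` (T::'a set)) \<subseteq> chars Lmc"
  unfolding evl_eq by (rule closure_ev_chars[OF alg_Lmc[OF assms]])


lemma extend:
  fixes T :: "'a::{topological_space, semigroup_mult} set"
  assumes chi: "\<kappa> \<in> closure (evl ` T)"
  shows "\<exists>\<kappa>'\<in>closure (evc ` T). \<forall>h\<in>Lmc. \<kappa>' h = \<kappa> h"
proof -
  define bnd where "bnd f = (if f \<in> CB then (SOME B. \<forall>x. cmod (f x) \<le> B) else 0)"
    for f :: "'a \<Rightarrow> complex"
  have bnd: "cmod (f x) \<le> bnd f" if "f \<in> CB" for f x
  proof -
    have "\<exists>B. \<forall>x. cmod (f x) \<le> B" using that unfolding CB_iff by blast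
    from someI_ex[OF this] show ?thesis using that by (simp add: bnd_def)
  qed
  define Box :: "(('a \<Rightarrow> complex) \<Rightarrow> complex) set" where "Box = {\<phi>. \<forall>f. cmod (\<phi> f) \<le> bnd f}"
  have Box_eq: "Box = PiE UNIV (\<lambda>f. cball 0 (bnd f))"
    unfolding Box_def by (auto simp: PiE_iff)
  have "compactin (product_topology (\<lambda>_. euclidean) UNIV) Box"
    unfolding Box_eq compactin_PiE by simp
  then have cBox: "compact Box" by (simp add: euclidean_product_topology)
  have clBox: "closed Box" unfolding Box_def
    by (intro closed_Collect_all closed_Collect_le continuous_intros coord_cont)
  have bnd0: "bnd f = 0" if "f \<notin> CB" for f using that by (simp add: bnd_def)
  have "cmod (evc s f) \<le> bnd f" for s f
    by (cases "f \<in> CB") (simp_all add: evc_def bnd bnd0)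
  then have "evc ` T \<subseteq> Box" by (auto simp: Box_def)
  then have KB: "closure (evc ` T) \<subseteq> Box" using clBox by (rule closure_minimal)
  define K where "K = closure (evc ` T)"
  have cK: "compact K" using compact_Int_closed[OF cBox closed_closure[of "evc ` T"]] KB
    by (simp add: K_def Int_absorb1)
  define P where "P = (\<lambda>(h, e). {\<phi>. cmod (\<phi> h - \<kappa> h) \<le> e})"
  define FF where "FF = P ` (Lmc \<times> {e. e > 0})"
  have "K \<inter> \<Inter>FF \<noteq> {}"
  proof (rule compact_imp_fip[OF cK])
    fix U assume "U \<in> FF"
    then obtain h e where "U = {\<phi>. cmod (\<phi> h - \<kappa> h) \<le> e}" by (auto simp: FF_def P_def)
    then show "closed U"
      using closed_Collect_le[OF continuous_on_norm[OF continuous_on_diff[OF coord_cont continuous_on_const]] continuous_on_const]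
      by simp
  next
    fix F' assume F': "finite F'" "F' \<subseteq> FF"
    then obtain C where C: "C \<subseteq> Lmc \<times> {e. e > 0}" "finite C" "F' = P ` C"
      using finite_subset_image[OF F'(1) F'(2)[unfolded FF_def]] by blast
    define e0 where "e0 = Min (insert 1 (snd ` C))"
    have e0: "e0 > 0" unfolding e0_def using C(1,2) by (subst Min_gr_iff) auto
    have e0le: "e0 \<le> e" if "(h, e) \<in> C" for h e unfolding e0_def
    proof (rule Min_le)
      show "finite (insert 1 (snd ` C))" using C(2) by simp
      have "e = snd (h, e)" by simp
      then show "e \<in> insert 1 (snd ` C)" using that by blast
    qed
    have "approx \<kappa> (evl ` T)" using chi closure_approx by blast
    moreover have "finite (fst ` C)" using C(2) by simp
    ultimately obtain s' where "s' \<in> evl ` T" "\<forall>h\<in>fst ` C. cmod (s' h - \<kappa> h) < e0"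
      unfolding approx_def using e0 by blast
    then obtain s where s: "s \<in> T" "\<forall>h\<in>fst ` C. cmod (evl s h - \<kappa> h) < e0" by blast
    have "evc s \<in> evc ` T" using s(1) by (rule imageI)
    then have sK: "evc s \<in> K" unfolding K_def by (rule subsetD[OF closure_subset])
    have sF: "evc s \<in> \<Inter>F'"
    proof
      fix U assume "U \<in> F'"
      then have "U \<in> P ` C" using C(3) by simp
      then obtain p where p: "p \<in> C" "U = P p" by (rule imageE) simp
      obtain h e where pe: "p = (h, e)" by (cases p)
      have he: "(h, e) \<in> C" "U = P (h, e)" using p pe by simp_all
      then have "h \<in> Lmc" using C(1) by (auto simp: mem_Times_iff)
      then have ev: "evc s h = evl s h" by (simp add: evc_def evl_def Lmc_CB)
      have "h \<in> fst ` C" using imageI[OF he(1), of fst] by simp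
      then have "cmod (evl s h - \<kappa> h) < e0" using s(2) by blast
      then have "cmod (evc s h - \<kappa> h) \<le> e" using ev e0le[OF he(1)] by simp
      then show "evc s \<in> U" unfolding he(2) P_def by simp
    qed
    have "evc s \<in> K \<inter> \<Inter>F'" using sK sF by (rule IntI)
    then show "K \<inter> \<Inter>F' \<noteq> {}" by (metis empty_iff)
  qed
  then obtain \<phi> where \<phi>: "\<phi> \<in> K" "\<phi> \<in> \<Inter>FF" by blast
  have "\<phi> h = \<kappa> h" if "h \<in> Lmc" for h
  proof (rule ccontr)
    assume ne: "\<phi> h \<noteq> \<kappa> h"
    define e where "e = cmod (\<phi> h - \<kappa> h) / 2"
    have "e > 0" using ne by (simp add: e_def)
    then have "P (h, e) \<in> FF" using that by (auto simp: FF_def)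
    then have "cmod (\<phi> h - \<kappa> h) \<le> e" using \<phi>(2) by (auto simp: P_def)
    then show False using \<open>e > 0\<close> by (simp add: e_def)
  qed
  then show ?thesis using \<phi>(1) unfolding K_def by blast
qed

lemma density:
  assumes psi: "\<psi> \<in> chars (CB :: ('a::topological_space \<Rightarrow> complex) set)"
  shows "\<psi> \<in> closure (range (evc :: 'a \<Rightarrow> _))"
proof -
  have "approx \<psi> (range (evc :: 'a \<Rightarrow> _))"
  proof (rule ccontr)
    assume "\<not> approx \<psi> (range (evc :: 'a \<Rightarrow> _))"
    then obtain F e where Fe: "finite F" "e > 0"
      and nf: "\<forall>s\<in>range (evc :: 'a \<Rightarrow> _). \<exists>f\<in>F. \<not> cmod (s f - \<psi> f) < e"
      unfolding approx_def by blast
    define F' where "F' = F \<inter> CB"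
    have fF': "finite F'" using Fe by (simp add: F'_def)
    have ex: "\<exists>f\<in>F'. e \<le> cmod (f x - \<psi> f)" for x :: 'a
    proof -
      obtain f where f: "f \<in> F" "\<not> cmod (evc x f - \<psi> f) < e" using nf by blast
      have "f \<in> CB"
      proof (rule ccontr)
        assume "f \<notin> CB"
        then have "evc x f - \<psi> f = 0" using char_out[OF psi] by (simp add: evc_def)
        then show False using f(2) Fe(2) by simp
      qed
      then show ?thesis using f by (auto simp: F'_def evc_def not_less)
    qed
    define g where "g f = (\<lambda>x. f x + - \<psi> f)" for f :: "'a \<Rightarrow> complex"
    have gCB: "g f \<in> CB" if "f \<in> CB" for f
      unfolding g_def using CB_add[OF that CB_const[of "- \<psi> f"]] by simp
    have g0: "\<psi> (g f) = 0" if "f \<in> CB" for f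
      unfolding g_def using char_add[OF psi that CB_const[of "- \<psi> f"]]
        char_const[OF psi alg_CB, of "- \<psi> f"] by simp
    have cgCB: "(\<lambda>x. cnj (g f x)) \<in> CB" if "f \<in> CB" for f
    proof -
      from gCB[OF that] obtain B where B: "B > 0" "\<forall>x. cmod (g f x) \<le> B"
        and c: "continuous_on UNIV (g f)" unfolding CB_iff by blast
      have "continuous_on UNIV (\<lambda>x. cnj (g f x))" by (intro continuous_intros c)
      then show ?thesis unfolding CB_iff using B by auto
    qed
    define t where "t f = (\<lambda>x. g f x * cnj (g f x))" for f
    have tCB: "t f \<in> CB" if "f \<in> CB" for f
      unfolding t_def using CB_mult[OF gCB[OF that] cgCB[OF that]] .
    have t0: "\<psi> (t f) = 0" if "f \<in> CB" for f
      unfolding t_def using char_mult[OF psi gCB[OF that] cgCB[OF that]] g0[OF that] by simp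
    define h where "h = (\<lambda>x. \<Sum>f\<in>F'. t f x)"
    have hs: "h \<in> CB \<and> \<psi> h = (\<Sum>f\<in>F'. \<psi> (t f))"
      unfolding h_def by (rule char_sum[OF psi alg_CB fF']) (use tCB in \<open>auto simp: F'_def\<close>)
    then have hCB: "h \<in> CB" and h0: "\<psi> h = 0" using t0 by (auto simp: F'_def)
    define hr where "hr x = (\<Sum>f\<in>F'. (cmod (g f x))\<^sup>2)" for x
    have h_hr: "h x = of_real (hr x)" for x
      unfolding h_def hr_def t_def of_real_sum by (rule sum.cong) (simp_all flip: complex_norm_square)
    have hr_ge: "e\<^sup>2 \<le> hr x" for x
    proof -
      obtain f where f: "f \<in> F'" "e \<le> cmod (f x - \<psi> f)" using ex by blast
      have "e\<^sup>2 \<le> (cmod (g f x))\<^sup>2" using f(2) Fe(2) by (simp add: g_def power_mono)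
      also have "\<dots> \<le> hr x" unfolding hr_def
        by (rule member_le_sum[OF f(1)]) (use fF' in auto)
      finally show ?thesis .
    qed
    have e2: "e\<^sup>2 > 0" using Fe by simp
    have hrpos: "hr x > 0" for x by (rule less_le_trans[OF e2 hr_ge])
    have hnz: "h x \<noteq> 0" for x using hrpos[of x] by (simp add: h_hr)
    have hiCB: "(\<lambda>x. inverse (h x)) \<in> CB"
    proof -
      have c: "continuous_on UNIV h" using hCB unfolding CB_iff by blast
      have "continuous_on UNIV (\<lambda>x. inverse (h x))" by (intro continuous_intros c) (use hnz in auto)
      moreover have "cmod (inverse (h x)) \<le> inverse (e\<^sup>2)" for x
      proof -
        have "cmod (inverse (h x)) = inverse (hr x)"
          by (simp only: h_hr norm_inverse norm_of_real abs_of_pos[OF hrpos])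
        also have "\<dots> \<le> inverse (e\<^sup>2)" using hr_ge[of x] e2 by (intro le_imp_inverse_le) auto
        finally show ?thesis .
      qed
      ultimately show ?thesis unfolding CB_iff using e2 by (intro conjI exI[of _ "inverse (e\<^sup>2)"]) auto
    qed
    have "\<psi> (\<lambda>x. h x * inverse (h x)) = \<psi> h * \<psi> (\<lambda>x. inverse (h x))"
      by (rule char_mult[OF psi hCB hiCB])
    moreover have "(\<lambda>x. h x * inverse (h x)) = (\<lambda>x. 1)" using hnz by (simp add: fun_eq_iff)
    ultimately show False using h0 char_one[OF psi] by simp
  qed
  then show ?thesis using closure_approx by blast
qed


lemma Top_CB:
  fixes f :: "'a::{topological_space, semigroup_mult} \<Rightarrow> complex"
  assumes semi: "semitopological TYPE('a)" and nu: "\<nu> \<in> closure (range evl)" and f: "f \<in> Lmc"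
  shows "Top \<nu> f \<in> CB"
proof -
  obtain \<nu>' where \<nu>': "\<nu>' \<in> closure (range (evc :: 'a \<Rightarrow> _))" "\<forall>h\<in>Lmc. \<nu>' h = \<nu> h"
    using extend[OF nu] by blast
  have ch: "\<nu>' \<in> chars CB" using \<nu>'(1) closure_evc by blast
  have "Top \<nu> f = Top \<nu>' f"
  proof (rule ext)
    fix s
    have "Ltrans s f \<in> Lmc" by (rule Ltrans_Lmc[OF semi f])
    then show "Top \<nu> f s = Top \<nu>' f s" using \<nu>'(2) by (simp add: Top_def)
  qed
  then show ?thesis using f ch unfolding Lmc_iff by simp
qed

lemma Top_Lmc:
  fixes f :: "'a::{topological_space, semigroup_mult} \<Rightarrow> complex"
  assumes semi: "semitopological TYPE('a)" and nu: "\<nu> \<in> closure (range evl)" and f: "f \<in> Lmc"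
  shows "Top \<nu> f \<in> Lmc"
  unfolding Lmc_iff
proof (intro conjI ballI)
  show "Top \<nu> f \<in> CB" by (rule Top_CB[OF semi nu f])
  fix \<mu> :: "('a \<Rightarrow> complex) \<Rightarrow> complex" assume mu: "\<mu> \<in> chars CB"
  define \<kappa> where "\<kappa> = (\<lambda>h. if h \<in> Lmc then \<mu> (Top \<nu> h) else 0)"
  have mu_cl: "\<mu> \<in> closure (range (evc :: 'a \<Rightarrow> _))" by (rule density[OF mu])
  have "approx \<kappa> (range evl)" unfolding approx_def
  proof (intro allI impI)
    fix F :: "('a \<Rightarrow> complex) set" and e :: real assume Fe: "finite F \<and> e > 0"
    have e2: "e / 2 > 0" using Fe by simp
    have fG: "finite ((\<lambda>h. Top \<nu> h) ` (F \<inter> Lmc))" using Fe by simp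
    have "approx \<mu> (range (evc :: 'a \<Rightarrow> _))" using mu_cl closure_approx by blast
    then obtain s1 where "s1 \<in> range (evc :: 'a \<Rightarrow> _)"
      "\<forall>g\<in>(\<lambda>h. Top \<nu> h) ` (F \<inter> Lmc). cmod (s1 g - \<mu> g) < e / 2"
      unfolding approx_def using fG e2 by blast
    then obtain z where z: "\<forall>g\<in>(\<lambda>h. Top \<nu> h) ` (F \<inter> Lmc). cmod (evc z g - \<mu> g) < e / 2"
      by blast
    have fG2: "finite ((\<lambda>h. Ltrans z h) ` (F \<inter> Lmc))" using Fe by simp
    have "approx \<nu> (range evl)" using nu closure_approx by blast
    then obtain s2 where "s2 \<in> range evl"
      "\<forall>g\<in>(\<lambda>h. Ltrans z h) ` (F \<inter> Lmc). cmod (s2 g - \<nu> g) < e / 2"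
      unfolding approx_def using fG2 e2 by blast
    then obtain w where w: "\<forall>g\<in>(\<lambda>h. Ltrans z h) ` (F \<inter> Lmc). cmod (evl w g - \<nu> g) < e / 2"
      by blast
    have "\<forall>h\<in>F. cmod (evl (z * w) h - \<kappa> h) < e"
    proof
      fix h assume hF: "h \<in> F"
      show "cmod (evl (z * w) h - \<kappa> h) < e"
      proof (cases "h \<in> Lmc")
        case True
        have hF': "h \<in> F \<inter> Lmc" using hF True by simp
        have "cmod (evc z (Top \<nu> h) - \<mu> (Top \<nu> h)) < e / 2" using z[rule_format, OF imageI[OF hF', of "Top \<nu>"]] by simp
        moreover have "evc z (Top \<nu> h) = \<nu> (Ltrans z h)"
          using Top_CB[OF semi nu True] by (simp add: evc_def Top_def)
        ultimately have a: "cmod (\<nu> (Ltrans z h) - \<mu> (Top \<nu> h)) < e / 2" by simp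
        have "cmod (evl w (Ltrans z h) - \<nu> (Ltrans z h)) < e / 2" using w[rule_format, OF imageI[OF hF', of "Ltrans z"]] by simp
        moreover have "evl w (Ltrans z h) = h (z * w)"
          using Ltrans_Lmc[OF semi True] by (simp add: evl_def Ltrans_def)
        ultimately have b: "cmod (h (z * w) - \<nu> (Ltrans z h)) < e / 2" by simp
        have "cmod (h (z * w) - \<mu> (Top \<nu> h)) < e / 2 + e / 2"
          by (rule norm_diff_triangle_less[OF b a])
        then show ?thesis using True by (simp add: evl_def \<kappa>_def)
      next
        case False
        then show ?thesis using Fe by (simp add: evl_def \<kappa>_def)
      qed
    qed
    then show "\<exists>s\<in>range evl. \<forall>h\<in>F. cmod (s h - \<kappa> h) < e" by blast
  qed
  then have "\<kappa> \<in> closure (range evl)" using closure_approx by blast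
  then obtain \<kappa>' where \<kappa>': "\<kappa>' \<in> closure (range (evc :: 'a \<Rightarrow> _))" "\<forall>h\<in>Lmc. \<kappa>' h = \<kappa> h"
    using extend by blast
  have ch: "\<kappa>' \<in> chars CB" using \<kappa>'(1) closure_evc by blast
  have "Top \<mu> (Top \<nu> f) = Top \<kappa>' f"
  proof (rule ext)
    fix s
    have L: "Ltrans s f \<in> Lmc" by (rule Ltrans_Lmc[OF semi f])
    have "Top \<mu> (Top \<nu> f) s = \<mu> (Ltrans s (Top \<nu> f))"
      by (simp only: Top_def[of \<mu> "Top \<nu> f"])
    also have "\<dots> = \<mu> (Top \<nu> (Ltrans s f))"
      by (simp only: Top_Ltrans)
    also have "\<dots> = \<kappa> (Ltrans s f)" using L by (simp add: \<kappa>_def)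
    also have "\<dots> = \<kappa>' (Ltrans s f)" using L \<kappa>'(2) by simp
    also have "\<dots> = Top \<kappa>' f s" by (simp only: Top_def[of \<kappa>' f])
    finally show "Top \<mu> (Top \<nu> f) s = Top \<kappa>' f s" .
  qed
  then show "Top \<mu> (Top \<nu> f) \<in> CB" using f ch unfolding Lmc_iff by simp
qed


theorem lemma4p4:
  fixes x y :: "nat \<Rightarrow> 'a::{t2_space, semigroup_mult}"
    and \<mu> \<nu> :: "('a \<Rightarrow> complex) \<Rightarrow> complex"
  assumes "semitopological TYPE('a)"
    and "unbounded_seq x" and "unbounded_seq y"
    and "\<mu> \<in> Sstar" and "\<nu> \<in> Sstar"
    and "\<nu> \<in> clLmc (range x)"
    and "\<mu> \<in> clLmc (range y)"
  shows "Lmc_mult \<mu> \<nu> \<in> clLmc {y k * x n | k n. k < n}"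
proof -
  note semi = assms(1)
  have nu_cl: "\<nu> \<in> closure (evl ` range x)" using assms(6) by (simp add: clLmc_def)
  have mu_cl: "\<mu> \<in> closure (evl ` range y)" using assms(7) by (simp add: clLmc_def)
  have "evl ` range x \<subseteq> range evl" by auto
  then have nuU: "\<nu> \<in> closure (range evl)" by (rule subsetD[OF closure_mono nu_cl])
  have nuN: "\<nu> \<notin> range evl" using assms(5) by (simp add: Sstar_def)
  define A where "A = {y k * x n | k n. k < n}"
  have "approx (Lmc_mult \<mu> \<nu>) (evl ` A)" unfolding approx_def
  proof (intro allI impI)
    fix F :: "('a \<Rightarrow> complex) set" and e :: real assume Fe: "finite F \<and> e > 0"
    have e2: "e / 2 > 0" using Fe by simp
    define F1 where "F1 = F \<inter> Lmc"
    have fF1: "finite (Top \<nu> ` F1)" using Fe by (simp add: F1_def)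
    have "approx \<mu> (evl ` range y)" using mu_cl closure_approx by blast
    then obtain s1 where s1: "s1 \<in> evl ` range y" "\<forall>g\<in>Top \<nu> ` F1. cmod (s1 g - \<mu> g) < e / 2"
      unfolding approx_def using fF1 e2 by blast
    from s1(1) obtain t where t: "t \<in> range y" "s1 = evl t" by (rule imageE) simp
    from t(1) obtain k where "t = y k" by (rule rangeE) simp
    then have k: "\<forall>g\<in>Top \<nu> ` F1. cmod (evl (y k) g - \<mu> g) < e / 2" using s1(2) t(2) by simp
    have sep: "\<forall>j. \<exists>g. evl (x j) g \<noteq> \<nu> g"
    proof
      fix j
      have "evl (x j) \<noteq> \<nu>" using nuN by (metis rangeI)
      then show "\<exists>g. evl (x j) g \<noteq> \<nu> g" by (simp add: fun_eq_iff)
    qed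
    obtain sp where sp: "\<forall>j. evl (x j) (sp j) \<noteq> \<nu> (sp j)" using choice[OF sep] by blast
    define gap where "gap j = cmod (evl (x j) (sp j) - \<nu> (sp j))" for j
    have gap: "gap j > 0" for j using sp by (simp add: gap_def)
    define d where "d = Min (insert (e / 2) (gap ` {..k}))"
    have fin: "finite (insert (e / 2) (gap ` {..k}))" by simp
    have d0: "d > 0" unfolding d_def using e2 gap by (subst Min_gr_iff[OF fin]) auto
    have de: "d \<le> e / 2" unfolding d_def by (rule Min_le[OF fin]) simp
    have dg: "d \<le> gap j" if "j \<le> k" for j unfolding d_def
      by (rule Min_le[OF fin]) (use that in simp)
    define G2 where "G2 = Ltrans (y k) ` F1 \<union> sp ` {..k}"
    have fG2: "finite G2" using Fe by (simp add: G2_def F1_def)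
    have "approx \<nu> (evl ` range x)" using nu_cl closure_approx by blast
    then obtain s2 where s2: "s2 \<in> evl ` range x" "\<forall>g\<in>G2. cmod (s2 g - \<nu> g) < d"
      unfolding approx_def using fG2 d0 by blast
    from s2(1) obtain t2 where t2: "t2 \<in> range x" "s2 = evl t2" by (rule imageE) simp
    from t2(1) obtain m where "t2 = x m" by (rule rangeE) simp
    then have m: "\<forall>g\<in>G2. cmod (evl (x m) g - \<nu> g) < d" using s2(2) t2(2) by simp
    have km: "k < m"
    proof (rule ccontr)
      assume "\<not> k < m"
      then have mk: "m \<le> k" by simp
      then have "sp m \<in> G2" unfolding G2_def by simp
      then have "cmod (evl (x m) (sp m) - \<nu> (sp m)) < d" using m by blast
      also have "\<dots> \<le> gap m" by (rule dg[OF mk])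
      finally show False by (simp add: gap_def)
    qed
    have inA: "y k * x m \<in> A" unfolding A_def using km by blast
    have "\<forall>f\<in>F. cmod (evl (y k * x m) f - Lmc_mult \<mu> \<nu> f) < e"
    proof
      fix f assume fF: "f \<in> F"
      show "cmod (evl (y k * x m) f - Lmc_mult \<mu> \<nu> f) < e"
      proof (cases "f \<in> Lmc")
        case True
        have f1: "f \<in> F1" using fF True by (simp add: F1_def)
        have "cmod (evl (y k) (Top \<nu> f) - \<mu> (Top \<nu> f)) < e / 2"
          using k[rule_format, OF imageI[OF f1, of "Top \<nu>"]] .
        moreover have "evl (y k) (Top \<nu> f) = \<nu> (Ltrans (y k) f)"
          using Top_Lmc[OF semi nuU True] by (simp add: evl_def Top_def)
        ultimately have a: "cmod (\<nu> (Ltrans (y k) f) - \<mu> (Top \<nu> f)) < e / 2" by simp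
        have "Ltrans (y k) f \<in> G2" unfolding G2_def using f1 by simp
        then have "cmod (evl (x m) (Ltrans (y k) f) - \<nu> (Ltrans (y k) f)) < d" using m by blast
        moreover have "evl (x m) (Ltrans (y k) f) = f (y k * x m)"
          using Ltrans_Lmc[OF semi True] by (simp add: evl_def Ltrans_def)
        ultimately have b: "cmod (f (y k * x m) - \<nu> (Ltrans (y k) f)) < e / 2" using de by simp
        have "cmod (f (y k * x m) - \<mu> (Top \<nu> f)) < e / 2 + e / 2"
          by (rule norm_diff_triangle_less[OF b a])
        then show ?thesis using True by (simp add: evl_def Lmc_mult_def)
      next
        case False
        then show ?thesis using Fe by (simp add: evl_def Lmc_mult_def)
      qed
    qed
    moreover have "evl (y k * x m) \<in> evl ` A" using inA by (rule imageI)
    ultimately show "\<exists>s\<in>evl ` A. \<forall>f\<in>F. cmod (s f - Lmc_mult \<mu> \<nu> f) < e" by blast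
  qed
  then have P: "Lmc_mult \<mu> \<nu> \<in> closure (evl ` A)" using closure_approx by blast
  have "SLmc = chars (Lmc :: ('a \<Rightarrow> complex) set)"
    unfolding SLmc_def by (rule spectrum_chars[OF alg_Lmc[OF semi]])
  then have "Lmc_mult \<mu> \<nu> \<in> SLmc" using P closure_evl[OF semi] by blast
  then show ?thesis using P unfolding clLmc_def A_def by blast
qed

end
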